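(* Assume all features are binary, $x_{i,k}\in\{0,1\}$ for all $i\in[n],k\in[p]$. Let $\mathbf q\in\mathbb R^{2nK}_{\ge0}$, $r\ge0$ and $T\in\mathbb R$, and for $k\in[p]$ define $$\mathrm{Prune}(k\mid\mathbf q,r)=\sum_{i\in[n]}\max\Big\{\sum_{l\in\mathcal D_i}q_{il}x_{l,k},\;x_{i,k}\Big[\sum_{l\in\mathcal D_i}q_{il}-\sum_{j\in\mathcal S_i}q_{ij}(1-x_{j,k})\Big]\Big\}+r\sqrt{\sum_{i\in[n]}\Big[\sum_{l\in\mathcal D_i}\max\{x_{i,k},x_{l,k}\}+\sum_{j\in\mathcal S_i}\max\{x_{i,k},x_{j,k}\}\Big]}.$$ If $\mathrm{Prune}(k\mid\mathbf q,r)\le T$, then for every descendant $k'\supseteq k$ of $k$, $\mathbf C_{k',:}\mathbf q+r\|\mathbf C_{k',:}\|_2\le T$.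
   Context: Let $n,K,p\ge1$ be integers and $[n]=\{1,\dots,n\}$. For each $i\in[n]$ let $\mathbf x_i=(x_{i,1},\dots,x_{i,p})^\top\in\mathbb R^p$, and let $\mathcal D_i,\mathcal S_i\subseteq[n]$ be sets of size $K$ (different-class resp. same-class neighbors of sample $i$). For $i,j\in[n]$ put $\mathbf c_{ij}=(\mathbf x_i-\mathbf x_j)\circ(\mathbf x_i-\mathbf x_j)$ (entrywise product). Vectors in $\mathbb R^{2nK}$ are indexed by the pairs $(i,l)$, $i\in[n]$, $l\in\mathcal D_i$ ("different-class pairs"), and the pairs $(i,j)$, $i\in[n]$, $j\in\mathcal S_i$ ("same-class pairs"); $\mathbf q$ has entries $q_{il},q_{ij}$. $\mathbf C\in\mathbb R^{p\times2nK}$ has column $\mathbf c_{il}$ for each different-class pair and column $-\mathbf c_{ij}$ for each same-class pair; $\mathbf C_{k,:}$ is its $k$-th row. The feature indices $[p]$ are nodes of a rooted graph-mining tree: $x_{i,k}=g(\#(H_k\sqsubseteq G_i))$ with $g(x)=1_{x>0}$, where $H_k$ is the subgraph at node $k$, $G_i$ the $i$-th input graph, $\#(H\sqsubseteq G)$ the number of non-overlapping occurrences of $H$ in $G$, and each node's subgraph is contained in its children's subgraphs. Write $k'\supseteq k$ if $k'$ is a descendant of $k$; then $x_{i,k'}\le x_{i,k}$ for all $i$ whenever $k'\supseteq k$. *)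

theory Defs
  imports Complex_Main
begin

text \<open>Samples are indexed by [n] = {1..n}, features by [p] = {1..p}.
  x i k is the k-th feature of sample i.  The weight vector q is split into
  qD i l (different-class pairs, l in D i) and qS i j (same-class pairs, j in S i).\<close>

definition cvec :: "(nat \<Rightarrow> nat \<Rightarrow> real) \<Rightarrow> nat \<Rightarrow> nat \<Rightarrow> nat \<Rightarrow> real" where
  "cvec x i j k = (x i k - x j k) * (x i k - x j k)"

definition Crow_q :: "nat \<Rightarrow> (nat \<Rightarrow> nat \<Rightarrow> real) \<Rightarrow> (nat \<Rightarrow> nat set) \<Rightarrow> (nat \<Rightarrow> nat set)
    \<Rightarrow> (nat \<Rightarrow> nat \<Rightarrow> real) \<Rightarrow> (nat \<Rightarrow> nat \<Rightarrow> real) \<Rightarrow> nat \<Rightarrow> real" where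
  "Crow_q n x D S qD qS k =
     (\<Sum>i\<in>{1..n}. \<Sum>l\<in>D i. qD i l * cvec x i l k)
     + (\<Sum>i\<in>{1..n}. \<Sum>j\<in>S i. qS i j * (- cvec x i j k))"

definition Crow_norm :: "nat \<Rightarrow> (nat \<Rightarrow> nat \<Rightarrow> real) \<Rightarrow> (nat \<Rightarrow> nat set) \<Rightarrow> (nat \<Rightarrow> nat set)
    \<Rightarrow> nat \<Rightarrow> real" where
  "Crow_norm n x D S k =
     sqrt ((\<Sum>i\<in>{1..n}. \<Sum>l\<in>D i. (cvec x i l k)\<^sup>2)
         + (\<Sum>i\<in>{1..n}. \<Sum>j\<in>S i. (- cvec x i j k)\<^sup>2))"

definition Prune :: "nat \<Rightarrow> (nat \<Rightarrow> nat \<Rightarrow> real) \<Rightarrow> (nat \<Rightarrow> nat set) \<Rightarrow> (nat \<Rightarrow> nat set)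
    \<Rightarrow> (nat \<Rightarrow> nat \<Rightarrow> real) \<Rightarrow> (nat \<Rightarrow> nat \<Rightarrow> real) \<Rightarrow> real \<Rightarrow> nat \<Rightarrow> real" where
  "Prune n x D S qD qS r k =
     (\<Sum>i\<in>{1..n}. max (\<Sum>l\<in>D i. qD i l * x l k)
                        (x i k * ((\<Sum>l\<in>D i. qD i l) - (\<Sum>j\<in>S i. qS i j * (1 - x j k)))))
     + r * sqrt (\<Sum>i\<in>{1..n}. (\<Sum>l\<in>D i. max (x i k) (x l k)) + (\<Sum>j\<in>S i. max (x i k) (x j k)))"

text \<open>Rooted tree on the feature indices given by a parent map; k' is a descendant
  of k (written k' \<supseteq> k in the paper) if k is reached from k' by following the
  parent map at least once.\<close>
definition descendant :: "(nat \<Rightarrow> nat) \<Rightarrow> nat \<Rightarrow> nat \<Rightarrow> bool" where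
  "descendant par k' k \<longleftrightarrow> (\<exists>m\<ge>1. (par ^^ m) k' = k)"

end

theory Submission
  imports Defs
begin


lemma bin_cases: "(v::real) \<in> {0,1} \<Longrightarrow> v = 0 \<or> v = 1" by auto

lemma gbound: "(a::real) \<in> {0,1} \<Longrightarrow> b \<in> {0,1} \<Longrightarrow> c \<in> {0,1} \<Longrightarrow> d \<in> {0,1}
  \<Longrightarrow> c \<le> a \<Longrightarrow> d \<le> b \<Longrightarrow> ((c - d) * (c - d))\<^sup>2 \<le> max a b"
  by (elim insertE emptyE) simp_all

lemma negsum: "(\<Sum>j\<in>A. (f j::real) * (- (1 - g j))) = - (\<Sum>j\<in>A. f j * (1 - g j))"
  unfolding sum_negf[symmetric] by (rule sum.cong) (simp_all add: right_diff_distrib)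

theorem lemma2:
  fixes n K p :: nat
    and x :: "nat \<Rightarrow> nat \<Rightarrow> real"
    and D S :: "nat \<Rightarrow> nat set"
    and qD qS :: "nat \<Rightarrow> nat \<Rightarrow> real"
    and par :: "nat \<Rightarrow> nat"
    and r T :: real
    and k k' :: nat
  assumes "n \<ge> 1" and "K \<ge> 1" and "p \<ge> 1"
    and D_sub: "\<forall>i\<in>{1..n}. D i \<subseteq> {1..n} \<and> card (D i) = K"
    and S_sub: "\<forall>i\<in>{1..n}. S i \<subseteq> {1..n} \<and> card (S i) = K"
    and binary: "\<forall>i\<in>{1..n}. \<forall>k\<in>{1..p}. x i k \<in> {0, 1}"
    and tree_mono: "\<forall>k1\<in>{1..p}. \<forall>k2\<in>{1..p}. descendant par k2 k1 \<longrightarrow>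
                      (\<forall>i\<in>{1..n}. x i k2 \<le> x i k1)"
    and qD_nonneg: "\<forall>i\<in>{1..n}. \<forall>l\<in>D i. qD i l \<ge> 0"
    and qS_nonneg: "\<forall>i\<in>{1..n}. \<forall>j\<in>S i. qS i j \<ge> 0"
    and "r \<ge> 0"
    and "k \<in> {1..p}" and "k' \<in> {1..p}"
    and desc: "descendant par k' k"
    and prune: "Prune n x D S qD qS r k \<le> T"
  shows "Crow_q n x D S qD qS k' + r * Crow_norm n x D S k' \<le> T"
proof -
  have xk: "\<And>i. i \<in> {1..n} \<Longrightarrow> x i k \<in> {0,1}" using binary \<open>k \<in> {1..p}\<close> by blast
  have xk': "\<And>i. i \<in> {1..n} \<Longrightarrow> x i k' \<in> {0,1}" using binary \<open>k' \<in> {1..p}\<close> by blast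
  have mono: "\<And>i. i \<in> {1..n} \<Longrightarrow> x i k' \<le> x i k" using tree_mono \<open>k \<in> {1..p}\<close> \<open>k' \<in> {1..p}\<close> desc by simp
  have finD: "\<And>i. i \<in> {1..n} \<Longrightarrow> finite (D i)" using D_sub finite_subset by blast
  have finS: "\<And>i. i \<in> {1..n} \<Longrightarrow> finite (S i)" using S_sub finite_subset by blast
  have Dsub: "\<And>i l. i \<in> {1..n} \<Longrightarrow> l \<in> D i \<Longrightarrow> l \<in> {1..n}" using D_sub by blast
  have Ssub: "\<And>i l. i \<in> {1..n} \<Longrightarrow> l \<in> S i \<Longrightarrow> l \<in> {1..n}" using S_sub by blast
  have pterm: "(\<Sum>l\<in>D i. qD i l * cvec x i l k') + (\<Sum>j\<in>S i. qS i j * (- cvec x i j k'))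
     \<le> max (\<Sum>l\<in>D i. qD i l * x l k)
            (x i k * ((\<Sum>l\<in>D i. qD i l) - (\<Sum>j\<in>S i. qS i j * (1 - x j k))))"
    if i: "i \<in> {1..n}" for i
  proof (cases "x i k' = 0")
    case True
    have "(\<Sum>l\<in>D i. qD i l * cvec x i l k') \<le> (\<Sum>l\<in>D i. qD i l * x l k)"
    proof (rule sum_mono)
      fix l assume l: "l \<in> D i"
      have "cvec x i l k' \<le> x l k"
        using bin_cases[OF xk'[OF Dsub[OF i l]]] mono[OF Dsub[OF i l]] True
        by (auto simp: cvec_def)
      then show "qD i l * cvec x i l k' \<le> qD i l * x l k"
        using qD_nonneg i l by (simp add: mult_left_mono)
    qed
    moreover have "(\<Sum>j\<in>S i. qS i j * (- cvec x i j k')) \<le> 0"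
    proof (rule sum_nonpos)
      fix j assume j: "j \<in> S i"
      have "0 \<le> cvec x i j k'" by (simp add: cvec_def)
      then show "qS i j * (- cvec x i j k') \<le> 0"
        using qS_nonneg i j by (simp add: mult_nonneg_nonneg)
    qed
    ultimately show ?thesis by linarith
  next
    case False
    then have b1: "x i k' = 1" using bin_cases[OF xk'[OF i]] by auto
    then have a1: "x i k = 1" using mono[OF i] bin_cases[OF xk[OF i]] by auto
    have "(\<Sum>l\<in>D i. qD i l * cvec x i l k') \<le> (\<Sum>l\<in>D i. qD i l)"
    proof (rule sum_mono)
      fix l assume l: "l \<in> D i"
      have "cvec x i l k' \<le> 1"
        using bin_cases[OF xk'[OF Dsub[OF i l]]] b1
        by (auto simp: cvec_def)
      then show "qD i l * cvec x i l k' \<le> qD i l"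
        using qD_nonneg i l mult_left_mono[of "cvec x i l k'" 1 "qD i l"] by simp
    qed
    moreover have "(\<Sum>j\<in>S i. qS i j * (- cvec x i j k')) \<le> (\<Sum>j\<in>S i. qS i j * (- (1 - x j k)))"
    proof (rule sum_mono)
      fix j assume j: "j \<in> S i"
      have "- cvec x i j k' \<le> - (1 - x j k)"
        using bin_cases[OF xk'[OF Ssub[OF i j]]] bin_cases[OF xk[OF Ssub[OF i j]]]
          mono[OF Ssub[OF i j]] b1
        by (auto simp: cvec_def)
      then show "qS i j * (- cvec x i j k') \<le> qS i j * (- (1 - x j k))"
        using qS_nonneg i j mult_left_mono[of "- cvec x i j k'" "- (1 - x j k)" "qS i j"] by blast
    qed
    moreover have "(\<Sum>j\<in>S i. qS i j * (- (1 - x j k))) = - (\<Sum>j\<in>S i. qS i j * (1 - x j k))"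
      by (rule negsum)
    ultimately show ?thesis using a1 by simp
  qed
  have nterm: "(\<Sum>l\<in>D i. (cvec x i l k')\<^sup>2) + (\<Sum>j\<in>S i. (- cvec x i j k')\<^sup>2)
     \<le> (\<Sum>l\<in>D i. max (x i k) (x l k)) + (\<Sum>j\<in>S i. max (x i k) (x j k))"
    if i: "i \<in> {1..n}" for i
  proof -
    have g: "(cvec x i l k')\<^sup>2 \<le> max (x i k) (x l k)" if l: "l \<in> {1..n}" for l
      unfolding cvec_def using gbound[OF xk[OF i] xk[OF l] xk'[OF i] xk'[OF l] mono[OF i] mono[OF l]] .
    have "(\<Sum>l\<in>D i. (cvec x i l k')\<^sup>2) \<le> (\<Sum>l\<in>D i. max (x i k) (x l k))"
      by (rule sum_mono) (rule g[OF Dsub[OF i]])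
    moreover have "(\<Sum>j\<in>S i. (- cvec x i j k')\<^sup>2) \<le> (\<Sum>j\<in>S i. max (x i k) (x j k))"
      proof (rule sum_mono)
      fix j assume j: "j \<in> S i"
      show "(- cvec x i j k')\<^sup>2 \<le> max (x i k) (x j k)" using g[OF Ssub[OF i j]] by simp
    qed
    ultimately show ?thesis by linarith
  qed
  have q: "Crow_q n x D S qD qS k' \<le> (\<Sum>i\<in>{1..n}. max (\<Sum>l\<in>D i. qD i l * x l k)
                        (x i k * ((\<Sum>l\<in>D i. qD i l) - (\<Sum>j\<in>S i. qS i j * (1 - x j k)))))"
    unfolding Crow_q_def sum.distrib[symmetric] by (rule sum_mono) (rule pterm)
  have nn: "(\<Sum>i\<in>{1..n}. (\<Sum>l\<in>D i. (cvec x i l k')\<^sup>2)) + (\<Sum>i\<in>{1..n}. (\<Sum>j\<in>S i. (- cvec x i j k')\<^sup>2))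
      \<le> (\<Sum>i\<in>{1..n}. (\<Sum>l\<in>D i. max (x i k) (x l k)) + (\<Sum>j\<in>S i. max (x i k) (x j k)))"
    unfolding sum.distrib[symmetric] by (rule sum_mono) (rule nterm)
  have "Crow_norm n x D S k' \<le> sqrt (\<Sum>i\<in>{1..n}. (\<Sum>l\<in>D i. max (x i k) (x l k)) + (\<Sum>j\<in>S i. max (x i k) (x j k)))"
    unfolding Crow_norm_def by (rule real_sqrt_le_mono[OF nn])
  then have "r * Crow_norm n x D S k' \<le> r * sqrt (\<Sum>i\<in>{1..n}. (\<Sum>l\<in>D i. max (x i k) (x l k)) + (\<Sum>j\<in>S i. max (x i k) (x j k)))"
    by (rule mult_left_mono[OF _ \<open>r \<ge> 0\<close>])
  with q prune show ?thesis unfolding Prune_def by linarith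
qed

end
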